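(* Let $\sigma$ be a permutation of $\{1,2,\ldots,n\}$ which is a single cycle $(x_1\ x_2\ \ldots\ x_k)$, $k\ge1$ (fixing all other elements). If $|\sigma(x)-x|\le 2$ for all $x\in\{1,\ldots,n\}$, then either $X=\{x_1,\ldots,x_k\}$ is a set of consecutive integers and $\sigma=\sigma_X$ or $\sigma=\sigma_X^{-1}$, or $k=2$ and $|x_1-x_2|=2$.
   Context: For a set of consecutive integers $X=\{b,b+1,\dots,a\}$, $\sigma_X$ is the permutation (fixing everything outside $X$) defined as follows: if $|X|$ is odd, $\sigma_X$ is the cycle $(b\ b{+}2\ b{+}4\ \cdots\ a{-}2\ a\ a{-}1\ a{-}3\ \cdots\ b{+}1)$; if $|X|$ is even, $\sigma_X=(b\ b{+}2\ b{+}4\ \cdots\ a{-}1\ a\ a{-}2\ a{-}4\ \cdots\ b{+}1)$. In particular $\sigma_X$ is the identity if $|X|=1$ and the transposition $(b\ a)$ if $|X|=2$. *)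

theory Defs
  imports "HOL-Combinatorics.Combinatorics"
begin

text \<open>For |X| odd this is (b b+2 ... a a-1 a-3 ... b+1); for |X| even it is
  (b b+2 ... a-1 a a-2 ... b+1).\<close>
definition sigmaX_list :: "nat \<Rightarrow> nat \<Rightarrow> nat list" where
  "sigmaX_list b a =
     filter (\<lambda>x. even (x - b)) [b..<Suc a] @ rev (filter (\<lambda>x. odd (x - b)) [b..<Suc a])"

definition sigmaX :: "nat \<Rightarrow> nat \<Rightarrow> nat \<Rightarrow> nat" where
  "sigmaX b a = cycle_of_list (sigmaX_list b a)"

end

theory Submission
  imports Defs
begin

definition near :: "nat \<Rightarrow> nat \<Rightarrow> bool" where
  "near x y \<longleftrightarrow> x \<le> y + 2 \<and> y \<le> x + 2"

lemma S_same: "sigmaX_list b b = [b]"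
  by (simp add: sigmaX_list_def)

lemma S_step: assumes "b < a" shows "sigmaX_list b a = b # rev (sigmaX_list (Suc b) a)"
proof -
  have u: "[b..<Suc a] = b # [Suc b..<Suc a]" using assms by (simp add: upt_conv_Cons)
  have e: "filter (\<lambda>x. even (x - b)) [Suc b..<Suc a] = filter (\<lambda>x. odd (x - Suc b)) [Suc b..<Suc a]"
    by (rule filter_cong) (auto simp: Suc_diff_Suc)
  have o: "filter (\<lambda>x. odd (x - b)) [Suc b..<Suc a] = filter (\<lambda>x. even (x - Suc b)) [Suc b..<Suc a]"
    by (rule filter_cong) (auto simp: Suc_diff_Suc)
  show ?thesis unfolding sigmaX_list_def u using e o by simp
qed

lemma S_set: "set (sigmaX_list b a) = {b..a}"
  unfolding sigmaX_list_def by auto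

lemma S_hd: "b \<le> a \<Longrightarrow> hd (sigmaX_list b a) = b"
  by (cases "b = a") (auto simp: S_same S_step)

lemma S_ne: "b \<le> a \<Longrightarrow> sigmaX_list b a \<noteq> []"
  using S_set[of b a] by auto

lemma S_last: "b < a \<Longrightarrow> last (sigmaX_list b a) = Suc b"
  by (simp add: S_step S_hd last_rev S_ne)

lemma S_two: "sigmaX_list b (Suc b) = [b, Suc b]"
  by (simp add: S_step S_same)

lemma cyc_map: "distinct L \<Longrightarrow> map (cycle_of_list L) L = rotate1 L"
  using cyclic_rotation[of L 1] by simp

lemma cyc_unique:
  assumes "distinct L" "\<And>x. x \<notin> set L \<Longrightarrow> f x = x" "\<And>x. x \<notin> set L \<Longrightarrow> g x = x"
    "map f L = map g L"
  shows "f = g"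
proof
  fix x show "f x = g x"
  proof (cases "x \<in> set L")
    case True
    then obtain i where "i < length L" "x = L ! i" by (auto simp: in_set_conv_nth)
    then show ?thesis using assms(4) by (metis nth_map)
  qed (use assms in auto)
qed

lemma cyc_rotate1: assumes "distinct L" shows "cycle_of_list (rotate1 L) = cycle_of_list L"
proof (rule cyc_unique[of "rotate1 L"])
  show "distinct (rotate1 L)" using assms by simp
  show "map (cycle_of_list (rotate1 L)) (rotate1 L) = map (cycle_of_list L) (rotate1 L)"
    using cyc_map[of "rotate1 L"] cyc_map[OF assms] assms by (simp add: rotate1_map[symmetric])
qed (auto intro: id_outside_supp)

lemma cyc_rotate: assumes "distinct L" shows "cycle_of_list (rotate n L) = cycle_of_list L"
  by (induction n) (auto simp: cyc_rotate1 assms)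

lemma rot_rev_rot: "rotate1 (rev (rotate1 (rev L))) = L"
  by (cases L rule: rev_cases) auto

lemma cyc_rev_comp: assumes "distinct L" shows "cycle_of_list (rev L) \<circ> cycle_of_list L = id"
proof (rule cyc_unique[of L])
  have "map (cycle_of_list (rev L)) L = rev (rotate1 (rev L))"
    using cyc_map[of "rev L"] assms by (metis distinct_rev rev_map rev_rev_ident)
  then have "map (cycle_of_list (rev L)) (rotate1 L) = L"
    by (metis rot_rev_rot rotate1_map)
  then show "map (cycle_of_list (rev L) \<circ> cycle_of_list L) L = map id L"
    using cyc_map[OF assms] by (simp flip: map_map)
qed (use assms in \<open>auto simp: id_outside_supp\<close>)

lemma cyc_rev: assumes "distinct L" shows "cycle_of_list (rev L) = inv (cycle_of_list L)"
proof -
  have "cycle_of_list (rev (rev L)) \<circ> cycle_of_list (rev L) = id"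
    using assms by (intro cyc_rev_comp) simp
  then show ?thesis using cyc_rev_comp[OF assms] by (metis inv_unique_comp rev_rev_ident)
qed

lemma core:
  "distinct xs \<Longrightarrow> 3 \<le> length xs \<Longrightarrow> successively near xs \<Longrightarrow> near (last xs) (hd xs)
   \<Longrightarrow> \<forall>x\<in>set xs. hd xs \<le> x \<Longrightarrow>
   \<exists>a. hd xs + 2 \<le> a \<and> (xs = hd xs # rev (sigmaX_list (Suc (hd xs)) a) \<or> xs = hd xs # sigmaX_list (Suc (hd xs)) a)"
proof (induction "length xs" arbitrary: xs rule: less_induct)
  case less
  obtain b ys where xs: "xs = b # ys" using less.prems(2) by (cases xs) auto
  have ly: "2 \<le> length ys" using less.prems(2) xs by simp
  have ysne: "ys \<noteq> []" using ly by auto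
  have gt: "\<forall>y\<in>set ys. b < y" using less.prems(1,5) xs by (auto simp: le_less)
  have sy: "successively near ys" and nh: "near b (hd ys)"
    using less.prems(3) xs ysne by (auto simp: successively_Cons)
  have nl: "near (last ys) b" using less.prems(4) xs ysne by simp
  have hdin: "hd ys \<in> set ys" "last ys \<in> set ys" using ysne by auto
  have hl: "hd ys \<noteq> last ys"
  proof
    assume "hd ys = last ys"
    moreover have "hd ys = ys ! 0" "last ys = ys ! (length ys - 1)" using ysne by (auto simp: hd_conv_nth last_conv_nth)
    moreover have "distinct ys" using less.prems(1) xs by simp
    ultimately have "ys ! 0 = ys ! (length ys - 1)" by simp
    then have "0 = length ys - 1"
      by (rule nth_eq_iff_index_eq[THEN iffD1, OF \<open>distinct ys\<close>, rotated 2]) (use ly in auto)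
    with ly show False by simp
  qed
  have hd2: "hd ys = Suc b \<or> hd ys = Suc (Suc b)" using nh gt hdin unfolding near_def by force
  have la2: "last ys = Suc b \<or> last ys = Suc (Suc b)" using nl gt hdin unfolding near_def by force
  show ?case
  proof (cases "length ys = 2")
    case True
    then obtain p q where ys: "ys = [p, q]"
      by (auto simp: numeral_2_eq_2 length_Suc_conv)
    have hp: "hd ys = p" "last ys = q" using ys by simp_all
    have "(p = Suc b \<and> q = Suc (Suc b)) \<or> (p = Suc (Suc b) \<and> q = Suc b)"
      using hd2 la2 hl unfolding hp by blast
    then have "xs = b # sigmaX_list (Suc b) (Suc (Suc b)) \<or> xs = b # rev (sigmaX_list (Suc b) (Suc (Suc b)))"
      unfolding S_two xs ys by auto
    then show ?thesis unfolding xs by (intro exI[of _ "Suc (Suc b)"]) auto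
  next
    case False
    hence ly3: "3 \<le> length ys" using ly by simp
    from hd2 show ?thesis
    proof
      assume h: "hd ys = Suc b"
      hence l: "last ys = Suc (Suc b)" using la2 hl by auto
      have "\<exists>a. hd ys + 2 \<le> a \<and> (ys = hd ys # rev (sigmaX_list (Suc (hd ys)) a) \<or> ys = hd ys # sigmaX_list (Suc (hd ys)) a)"
      proof (rule less.hyps)
        show "length ys < length xs" using xs by simp
        show "distinct ys" using less.prems(1) xs by simp
        show "near (last ys) (hd ys)" using h l by (simp add: near_def)
        show "\<forall>x\<in>set ys. hd ys \<le> x" using gt h by auto
      qed (use ly3 sy in auto)
      then obtain a where a: "Suc b + 2 \<le> a" and
        c: "ys = Suc b # rev (sigmaX_list (Suc (Suc b)) a) \<or> ys = Suc b # sigmaX_list (Suc (Suc b)) a"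
        using h by auto
      have a3: "Suc (Suc (Suc b)) \<le> a"
      proof (rule ccontr)
        assume "\<not> ?thesis" hence "a = Suc (Suc b)" using a by simp
        then have "length ys = 2" using c by (auto simp: S_same)
        then show False using ly3 by simp
      qed
      have "ys \<noteq> Suc b # sigmaX_list (Suc (Suc b)) a"
        using l a3 S_last[of "Suc (Suc b)" a] by (cases "sigmaX_list (Suc (Suc b)) a") auto
      then have "ys = sigmaX_list (Suc b) a" using c a S_step[of "Suc b" a] by auto
      then show ?thesis using xs a by (intro exI[of _ a]) auto
    next
      assume h: "hd ys = Suc (Suc b)"
      hence l: "last ys = Suc b" using la2 hl by auto
      define bl where "bl = butlast ys"
      have ysd: "ys = bl @ [Suc b]" using l ysne unfolding bl_def by (metis append_butlast_last_id)
      have blne: "bl \<noteq> []" using ysd ly by auto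
      define ys' where "ys' = Suc b # bl"
      have d: "distinct ys'" using less.prems(1) xs ysd unfolding ys'_def by auto
      have sbl: "successively near bl" "near (last bl) (Suc b)" using sy ysd blne
        by (auto simp: successively_append_iff)
      have hbl: "hd bl = Suc (Suc b)" using h ysd blne by simp
      have "\<exists>a. hd ys' + 2 \<le> a \<and> (ys' = hd ys' # rev (sigmaX_list (Suc (hd ys')) a) \<or> ys' = hd ys' # sigmaX_list (Suc (hd ys')) a)"
      proof (rule less.hyps)
        show "length ys' < length xs" using xs ysd ys'_def by simp
        show "3 \<le> length ys'" using ly3 ysd ys'_def by simp
        show "successively near ys'" using sbl hbl blne unfolding ys'_def by (auto simp: successively_Cons near_def)
        show "near (last ys') (hd ys')" using sbl blne unfolding ys'_def by simp
        show "\<forall>x\<in>set ys'. hd ys' \<le> x" using gt ysd unfolding ys'_def by auto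
      qed (use d in auto)
      then obtain a where a: "Suc b + 2 \<le> a" and
        c: "bl = rev (sigmaX_list (Suc (Suc b)) a) \<or> bl = sigmaX_list (Suc (Suc b)) a"
        unfolding ys'_def by auto
      have a3: "Suc (Suc (Suc b)) \<le> a"
      proof (rule ccontr)
        assume "\<not> ?thesis" hence "a = Suc (Suc b)" using a by simp
        then have "length bl = 1" using c by (auto simp: S_same)
        then show False using ly3 ysd by simp
      qed
      have "bl \<noteq> rev (sigmaX_list (Suc (Suc b)) a)"
        using hbl a3 S_last[of "Suc (Suc b)" a] S_ne[of "Suc (Suc b)" a] by (cases "sigmaX_list (Suc (Suc b)) a" rule: rev_cases) auto
      then have "bl = sigmaX_list (Suc (Suc b)) a" using c by auto
      then have "ys = rev (sigmaX_list (Suc b) a)" using ysd a S_step[of "Suc b" a] by simp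
      then show ?thesis using xs a by (intro exI[of _ a]) auto
    qed
  qed
qed

lemma cycR_rotate1:
  assumes "successively near L" "near (last L) (hd L)"
  shows "successively near (rotate1 L) \<and> near (last (rotate1 L)) (hd (rotate1 L))"
proof (cases L)
  case (Cons x ys)
  show ?thesis
  proof (cases "ys = []")
    case False
    then show ?thesis using assms Cons by (auto simp: successively_append_iff successively_Cons)
  qed (use assms Cons in auto)
qed (use assms in auto)

lemma cycR_rotate:
  assumes "successively near L" "near (last L) (hd L)"
  shows "successively near (rotate n L) \<and> near (last (rotate n L)) (hd (rotate n L))"
  by (induction n) (use assms cycR_rotate1 in auto)

lemma cyc_inv_form:
  assumes "distinct (b # Z)"
  shows "cycle_of_list (b # Z) = inv (cycle_of_list (b # rev Z))"
proof -
  have "cycle_of_list (b # Z) = cycle_of_list (rotate1 (b # Z))"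
    using cyc_rotate1[OF assms] by simp
  also have "rotate1 (b # Z) = rev (b # rev Z)" by simp
  also have "cycle_of_list (rev (b # rev Z)) = inv (cycle_of_list (b # rev Z))"
    using assms by (intro cyc_rev) auto
  finally show ?thesis .
qed

theorem proposition5p2:
  fixes n :: nat and \<sigma> :: "nat \<Rightarrow> nat" and xs :: "nat list"
  assumes "\<sigma> permutes {1..n}"
    and "xs \<noteq> []" and "distinct xs" and "set xs \<subseteq> {1..n}"
    and "\<sigma> = cycle_of_list xs"
    and "\<forall>x\<in>{1..n}. \<bar>int (\<sigma> x) - int x\<bar> \<le> 2"
  shows "(\<exists>b a. b \<le> a \<and> set xs = {b..a} \<and> (\<sigma> = sigmaX b a \<or> \<sigma> = inv (sigmaX b a)))
         \<or> (length xs = 2 \<and> \<bar>int (xs ! 0) - int (xs ! 1)\<bar> = 2)"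
proof -
  have m: "map \<sigma> xs = rotate1 xs" using cyc_map[OF assms(3)] assms(5) by simp
  have nr: "near x (\<sigma> x)" if "x \<in> set xs" for x
    using assms(4,6) that unfolding near_def by force
  have sx: "successively near xs"
    unfolding successively_conv_nth
  proof (intro allI impI)
    fix i assume i: "Suc i < length xs"
    have "\<sigma> (xs ! i) = rotate1 xs ! i" using m i by (metis Suc_lessD nth_map)
    also have "\<dots> = xs ! Suc i" using i by (simp add: nth_rotate1)
    finally show "near (xs ! i) (xs ! Suc i)" using nr[of "xs ! i"] i
      by (metis Suc_lessD nth_mem)
  qed
  have "\<sigma> (last xs) = hd xs"
    using m assms(2) by (metis last_map rotate1_hd_tl last_snoc)
  then have wx: "near (last xs) (hd xs)" using nr[of "last xs"] assms(2) by simp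
  have "length xs \<noteq> 0" using assms(2) by simp
  then have "length xs = 1 \<or> length xs = 2 \<or> 3 \<le> length xs" by linarith
  then consider "length xs = 1" | "length xs = 2" | "3 \<le> length xs" by blast
  then show ?thesis
  proof cases
    case 1
    then obtain x where xs: "xs = [x]" by (auto simp: length_Suc_conv)
    have "\<sigma> = sigmaX x x" using assms(5) xs by (simp add: sigmaX_def S_same)
    then show ?thesis using xs by (intro disjI1 exI[of _ x]) auto
  next
    case 2
    then obtain x y where xs: "xs = [x, y]" by (auto simp: numeral_2_eq_2 length_Suc_conv)
    have "x \<noteq> y" using assms(3) xs by simp
    have nxy: "near x y" using wx sx xs by simp
    show ?thesis
    proof (cases "\<bar>int x - int y\<bar> = 2")
      case True then show ?thesis using xs by simp
    next
      case False
      then have o: "y = Suc x \<or> x = Suc y" using nxy \<open>x \<noteq> y\<close> unfolding near_def by arith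
      from o show ?thesis
      proof
        assume y: "y = Suc x"
        have "\<sigma> = sigmaX x (Suc x)" using assms(5) xs y by (simp add: sigmaX_def S_two)
        moreover have "set xs = {x..Suc x}" using xs y by auto
        ultimately show ?thesis by (intro disjI1 exI[of _ x] exI[of _ "Suc x"]) auto
      next
        assume x: "x = Suc y"
        have "\<sigma> = transpose (Suc y) y" using assms(5) xs x by simp
        also have "\<dots> = transpose y (Suc y)" by (simp add: transpose_commute)
        also have "\<dots> = sigmaX y (Suc y)" by (simp add: sigmaX_def S_two)
        finally have "\<sigma> = sigmaX y (Suc y)" .
        moreover have "set xs = {y..Suc y}" using xs x by auto
        ultimately show ?thesis by (intro disjI1 exI[of _ y] exI[of _ "Suc y"]) auto
      qed
    qed
  next
    case 3
    define b where "b = Min (set xs)"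
    have bin: "b \<in> set xs" using assms(2) unfolding b_def by simp
    then obtain j where j: "j < length xs" "xs ! j = b" by (auto simp: in_set_conv_nth)
    define ys where "ys = rotate j xs"
    have hy: "hd ys = b" using j assms(2) unfolding ys_def by (simp add: hd_rotate_conv_nth)
    have dy: "distinct ys" and sety: "set ys = set xs" and ly: "length ys = length xs"
      using assms(3) unfolding ys_def by auto
    have cy: "successively near ys" "near (last ys) (hd ys)"
      using cycR_rotate[OF sx wx, of j] unfolding ys_def by auto
    have mn: "\<forall>x\<in>set ys. hd ys \<le> x" using sety hy unfolding b_def by simp
    obtain a where a: "b + 2 \<le> a" and
      c: "ys = b # rev (sigmaX_list (Suc b) a) \<or> ys = b # sigmaX_list (Suc b) a"
      using core[OF dy _ cy mn] ly 3 hy by auto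
    have ba: "b < a" using a by simp
    have setS: "set (b # sigmaX_list (Suc b) a) = {b..a}" using ba by (auto simp: S_set)
    have sx': "\<sigma> = cycle_of_list ys" using assms(3,5) unfolding ys_def by (simp add: cyc_rotate)
    from c show ?thesis
    proof
      assume "ys = b # rev (sigmaX_list (Suc b) a)"
      then have "ys = sigmaX_list b a" using S_step[OF ba] by simp
      then show ?thesis using sx' sety ba by (intro disjI1 exI[of _ b] exI[of _ a]) (auto simp: sigmaX_def S_set)
    next
      assume ysd: "ys = b # sigmaX_list (Suc b) a"
      have "\<sigma> = inv (cycle_of_list (b # rev (sigmaX_list (Suc b) a)))"
        using sx' ysd dy cyc_inv_form by simp
      then have "\<sigma> = inv (sigmaX b a)" using S_step[OF ba] by (simp add: sigmaX_def)
      then show ?thesis using sety ysd setS ba by (intro disjI1 exI[of _ b] exI[of _ a]) auto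
    qed
  qed
qed

end
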